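(* For every $m \in \mathbb{Z}_{>0}$, we have $h_s(m) \geq m(m-1)+1$; for $m\ge 2$ the right-hand side equals $h(1,m-1)$.
   Context: A real matrix is called totally $1$-submodular if every square submatrix (of every size) has determinant of absolute value at most $1$. For $t \in \mathbb{R}^m$ and $A\in\mathbb{R}^{m\times n}$ with columns $A_1,\dots,A_n$, $t+A$ denotes the matrix with columns $t+A_1,\dots,t+A_n$. The shifted Heller constant $h_s(m)$ is the maximum $n$ such that there exist $t \in [0,1)^m\setminus\{\mathbf 0\}$ and $A \in \{-1,0,1\}^{m\times n}$ with pairwise distinct columns such that $t+A$ is totally $1$-submodular. $h(1,k)$ denotes the maximum number of pairwise distinct columns of an integer matrix with $k$ rows whose $k\times k$ minors have maximum absolute value exactly $1$; by Heller's theorem $h(1,k)=k^2+k+1$. *)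

theory Defs
  imports "Jordan_Normal_Form.Determinant" "Jordan_Normal_Form.DL_Submatrix"
begin

definition tot_1_submod :: "real mat \<Rightarrow> bool" where
  "tot_1_submod M \<longleftrightarrow>
     (\<forall>I J. I \<subseteq> {..<dim_row M} \<longrightarrow> J \<subseteq> {..<dim_col M} \<longrightarrow> card I = card J \<longrightarrow>
        \<bar>det (submatrix M I J)\<bar> \<le> 1)"

definition shift_mat :: "real vec \<Rightarrow> int mat \<Rightarrow> real mat" where
  "shift_mat t A = mat (dim_row A) (dim_col A) (\<lambda>(i,j). t $ i + real_of_int (A $$ (i,j)))"

definition hs_admissible :: "nat \<Rightarrow> nat \<Rightarrow> bool" where
  "hs_admissible m n \<longleftrightarrow>
     (\<exists>(t :: real vec) (A :: int mat).
        dim_vec t = m \<and> (\<forall>i<m. 0 \<le> t $ i \<and> t $ i < 1) \<and> t \<noteq> 0\<^sub>v m \<and>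
        A \<in> carrier_mat m n \<and> (\<forall>i<m. \<forall>j<n. A $$ (i,j) \<in> {-1, 0, 1}) \<and>
        distinct (cols A) \<and> tot_1_submod (shift_mat t A))"

definition shifted_heller :: "nat \<Rightarrow> nat" where
  "shifted_heller m = Max {n. hs_admissible m n}"

end

theory Submission
  imports Defs
begin


lemma det_zero_dim: "A \<in> carrier_mat 0 0 \<Longrightarrow> det (A::real mat) = 1"
  by (simp add: det_def' permutes_empty)

lemma colsum_zero_det:
  fixes A :: "real mat"
  assumes A: "A \<in> carrier_mat n n" and n: "n > 0"
    and cs: "\<And>j. j < n \<Longrightarrow> (\<Sum>i<n. A $$ (i,j)) = 0"
  shows "det A = 0"
proof -
  have T: "transpose_mat A \<in> carrier_mat n n" using A by simp
  have "transpose_mat A *\<^sub>v (vec n (\<lambda>_. 1)) = 0\<^sub>v n"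
  proof (rule eq_vecI)
    fix j assume j: "j < dim_vec (0\<^sub>v n :: real vec)"
    then have j: "j < n" by simp
    have "(transpose_mat A *\<^sub>v (vec n (\<lambda>_. 1))) $ j = (\<Sum>i<n. A $$ (i,j))"
      using A j by (simp add: mult_mat_vec_def scalar_prod_def lessThan_atLeast0)
    then show "(transpose_mat A *\<^sub>v (vec n (\<lambda>_. 1))) $ j = 0\<^sub>v n $ j" using cs j by simp
  qed (use A in simp)
  moreover have "vec n (\<lambda>_. 1) \<noteq> (0\<^sub>v n :: real vec)"
    using n by (metis index_vec index_zero_vec(1) zero_neq_one)
  ultimately have "det (transpose_mat A) = 0"
    using det_0_iff_vec_prod_zero[OF T] vec_carrier by blast
  then show ?thesis using det_transpose[OF A] by simp
qed

definition netw :: "real mat \<Rightarrow> nat \<Rightarrow> bool" where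
 "netw A n \<longleftrightarrow> A \<in> carrier_mat n n \<and> (\<forall>i<n. \<forall>j<n. A$$(i,j) \<in> {-1,0,1})
   \<and> (\<forall>j<n. \<forall>i<n. \<forall>i'<n. A$$(i,j) = 1 \<longrightarrow> A$$(i',j) = 1 \<longrightarrow> i = i')
   \<and> (\<forall>j<n. \<forall>i<n. \<forall>i'<n. A$$(i,j) = -1 \<longrightarrow> A$$(i',j) = -1 \<longrightarrow> i = i')"

lemma netw_delete:
  assumes "netw A (Suc n)" "i < Suc n" "j < Suc n"
  shows "netw (mat_delete A i j) n"
proof -
  have C: "A \<in> carrier_mat (Suc n) (Suc n)" using assms unfolding netw_def by auto
  have idx: "\<And>a b. a < n \<Longrightarrow> b < n \<Longrightarrow> mat_delete A i j $$ (a,b) =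
     A $$ (if a < i then a else Suc a, if b < j then b else Suc b)"
    using C by (simp add: mat_delete_def)
  have inj: "\<And>a b. (if a < i then a else Suc a) = (if b < i then b else Suc b) \<Longrightarrow> a = b"
    by (auto split: if_splits)
  show ?thesis
    unfolding netw_def
  proof (intro conjI allI impI)
    show "mat_delete A i j \<in> carrier_mat n n" using C by (simp add: mat_delete_def)
  next
    fix a b assume "a < n" "b < n"
    then show "mat_delete A i j $$ (a,b) \<in> {-1,0,1}"
      using assms(1) idx unfolding netw_def by auto
  next
    fix b a a' assume h: "b < n" "a < n" "a' < n" "mat_delete A i j $$ (a,b) = 1" "mat_delete A i j $$ (a',b) = 1"
    then have "(if a < i then a else Suc a) = (if a' < i then a' else Suc a')"
      using assms(1) idx unfolding netw_def
      by (smt (verit, best) Suc_less_eq less_SucI)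
    then show "a = a'" using inj by blast
  next
    fix b a a' assume h: "b < n" "a < n" "a' < n" "mat_delete A i j $$ (a,b) = -1" "mat_delete A i j $$ (a',b) = -1"
    then have "(if a < i then a else Suc a) = (if a' < i then a' else Suc a')"
      using assms(1) idx unfolding netw_def
      by (smt (verit, best) Suc_less_eq less_SucI)
    then show "a = a'" using inj by blast
  qed
qed

lemma sum_le_one_nonzero:
  fixes f :: "nat \<Rightarrow> real"
  assumes "\<And>i. i < n \<Longrightarrow> f i \<in> {-1,0,1}"
    and "\<And>i i'. i < n \<Longrightarrow> i' < n \<Longrightarrow> f i \<noteq> 0 \<Longrightarrow> f i' \<noteq> 0 \<Longrightarrow> i = i'"
  shows "(\<Sum>i<n. f i) \<in> {-1,0,1}"
proof (cases "\<exists>i<n. f i \<noteq> 0")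
  case True
  then obtain i0 where i0: "i0 < n" "f i0 \<noteq> 0" by blast
  have "(\<Sum>i<n. f i) = (\<Sum>i\<in>{i0}. f i)"
    by (rule sum.mono_neutral_right) (use i0 assms(2) in auto)
  then show ?thesis using assms(1)[OF i0(1)] i0 by auto
next
  case False
  then have "(\<Sum>i<n. f i) = 0" by simp
  then show ?thesis by simp
qed

lemma netw_det: "netw A n \<Longrightarrow> det A \<in> {-1,0,1}"
proof (induction n arbitrary: A)
  case 0
  then have "A \<in> carrier_mat 0 0" unfolding netw_def by auto
  then show ?case using det_zero_dim by simp
next
  case (Suc n)
  have C: "A \<in> carrier_mat (Suc n) (Suc n)" and E: "\<And>i j. i < Suc n \<Longrightarrow> j < Suc n \<Longrightarrow> A$$(i,j) \<in> {-1,0,1}"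
    and U1: "\<And>j i i'. j < Suc n \<Longrightarrow> i < Suc n \<Longrightarrow> i' < Suc n \<Longrightarrow> A$$(i,j) = 1 \<Longrightarrow> A$$(i',j) = 1 \<Longrightarrow> i = i'"
    and U2: "\<And>j i i'. j < Suc n \<Longrightarrow> i < Suc n \<Longrightarrow> i' < Suc n \<Longrightarrow> A$$(i,j) = -1 \<Longrightarrow> A$$(i',j) = -1 \<Longrightarrow> i = i'"
    using Suc.prems unfolding netw_def by blast+
  show ?case
  proof (cases "\<exists>j<Suc n. (\<forall>i<Suc n. A$$(i,j) \<noteq> 1) \<or> (\<forall>i<Suc n. A$$(i,j) \<noteq> -1)")
    case True
    then obtain j where j: "j < Suc n" and jc: "(\<forall>i<Suc n. A$$(i,j) \<noteq> 1) \<or> (\<forall>i<Suc n. A$$(i,j) \<noteq> -1)"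
      by blast
    have "det A = (\<Sum>i<Suc n. A $$ (i,j) * cofactor A i j)"
      by (rule laplace_expansion_column[OF C j])
    also have "\<dots> \<in> {-1,0,1}"
    proof (rule sum_le_one_nonzero)
      fix i assume i: "i < Suc n"
      have "det (mat_delete A i j) \<in> {-1,0,1}"
        using Suc.IH netw_delete[OF Suc.prems i j] by blast
      moreover have "((-1::real)^(i+j)) \<in> {-1,1}"
        by (cases "even (i+j)") auto
      ultimately show "A $$ (i,j) * cofactor A i j \<in> {-1,0,1}"
        using E[OF i j] unfolding cofactor_def by auto
    next
      fix i i' assume i: "i < Suc n" "i' < Suc n" "A $$ (i,j) * cofactor A i j \<noteq> 0"
        "A $$ (i',j) * cofactor A i' j \<noteq> 0"
      then have "A $$ (i,j) \<noteq> 0" "A $$ (i',j) \<noteq> 0" by auto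
      moreover have "A $$ (i,j) \<in> {-1,0,1}" "A $$ (i',j) \<in> {-1,0,1}" using E[OF i(1) j] E[OF i(2) j] by auto
      ultimately show "i = i'"
      proof (cases "\<forall>i<Suc n. A$$(i,j) \<noteq> 1")
        case True
        then have "A $$ (i,j) = -1" "A $$ (i',j) = -1" using i(1,2) \<open>A $$ (i,j) \<noteq> 0\<close> \<open>A $$ (i',j) \<noteq> 0\<close> E[OF i(1) j] E[OF i(2) j] by auto
        then show ?thesis using U2[OF j i(1) i(2)] by blast
      next
        case False
        then have c: "\<forall>i<Suc n. A$$(i,j) \<noteq> -1" using jc by blast
        then have "A $$ (i,j) = 1" "A $$ (i',j) = 1" using i(1,2) \<open>A $$ (i,j) \<noteq> 0\<close> \<open>A $$ (i',j) \<noteq> 0\<close> E[OF i(1) j] E[OF i(2) j] by auto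
        then show ?thesis using U1[OF j i(1) i(2)] by blast
      qed
    qed
    finally show ?thesis .
  next
    case False
    have "det A = 0"
    proof (rule colsum_zero_det[OF C])
      fix j assume j: "j < Suc n"
      obtain i1 where i1: "i1 < Suc n" "A$$(i1,j) = 1" using False j by blast
      obtain i2 where i2: "i2 < Suc n" "A$$(i2,j) = -1" using False j by blast
      have ne: "i1 \<noteq> i2" using i1 i2 by auto
      have "(\<Sum>i<Suc n. A $$ (i,j)) = (\<Sum>i\<in>{i1,i2}. A $$ (i,j))"
      proof (rule sum.mono_neutral_right)
        show "\<forall>i\<in>{..<Suc n} - {i1, i2}. A $$ (i, j) = 0"
        proof
          fix i assume "i \<in> {..<Suc n} - {i1, i2}"
          then have i: "i < Suc n" "i \<noteq> i1" "i \<noteq> i2" by auto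
          have "A $$ (i,j) \<noteq> 1" using U1[OF j i(1) i1(1) _ i1(2)] i by blast
          moreover have "A $$ (i,j) \<noteq> -1" using U2[OF j i(1) i2(1) _ i2(2)] i by blast
          ultimately show "A $$ (i,j) = 0" using E[OF i(1) j] by blast
        qed
      qed (use i1 i2 in auto)
      also have "\<dots> = 0" using ne i1 i2 by simp
      finally show "(\<Sum>i<Suc n. A $$ (i,j)) = 0" .
    qed simp
    then show ?thesis by simp
  qed
qed



lemma det_bound:
  fixes A :: "real mat"
  assumes A: "A \<in> carrier_mat n n"
    and E: "\<And>i j. i < n \<Longrightarrow> j < n \<Longrightarrow> \<bar>A$$(i,j)\<bar> \<le> 1"
    and i0: "i0 < n" and R: "\<And>j. j < n \<Longrightarrow> \<bar>A$$(i0,j)\<bar> \<le> c"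
  shows "\<bar>det A\<bar> \<le> fact n * c"
proof -
  have c0: "0 \<le> c" using R[of 0] i0 by fastforce
  let ?P = "{p. p permutes {0..<n}}"
  have fP: "finite ?P" by (simp add: finite_permutations)
  have "\<bar>det A\<bar> = \<bar>\<Sum>p\<in>?P. signof p * (\<Prod>i = 0..<n. A $$ (i, p i))\<bar>"
    using det_def'[OF A] by simp
  also have "\<dots> \<le> (\<Sum>p\<in>?P. \<bar>signof p * (\<Prod>i = 0..<n. A $$ (i, p i))\<bar>)"
    by (rule sum_abs)
  also have "\<dots> \<le> (\<Sum>p\<in>?P. c)"
  proof (rule sum_mono)
    fix p assume p: "p \<in> ?P"
    then have pi: "\<And>i. i < n \<Longrightarrow> p i < n"
      by (metis atLeastLessThan_iff mem_Collect_eq permutes_in_image zero_le)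
    have "\<bar>signof p * (\<Prod>i = 0..<n. A $$ (i, p i))\<bar> = (\<Prod>i = 0..<n. \<bar>A $$ (i, p i)\<bar>)"
      by (simp add: abs_mult abs_prod sign_def)
    also have "\<dots> \<le> (\<Prod>i = 0..<n. if i = i0 then c else 1)"
      by (rule prod_mono) (use E R pi in auto)
    also have "\<dots> = c" using i0 by simp
    finally show "\<bar>signof p * (\<Prod>i = 0..<n. A $$ (i, p i))\<bar> \<le> c" .
  qed
  also have "\<dots> = fact n * c"
    using card_permutations[of "{0..<n}" n] by simp
  finally show ?thesis .
qed



definition vv :: "nat \<Rightarrow> nat \<Rightarrow> nat \<Rightarrow> int vec" where
  "vv m a b = vec m (\<lambda>i. if i = 0 then 0 else (if i = a then 1 else 0) - (if i = b then 1 else 0))"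

lemma vv_idx: "i < m \<Longrightarrow> vv m a b $ i = (if i = 0 then 0 else (if i = a then 1 else 0) - (if i = b then 1 else 0))"
  unfolding vv_def by simp

lemma vv_carrier: "vv m a b \<in> carrier_vec m" unfolding vv_def by simp

lemma vv_inj:
  assumes "vv m a b = vv m a' b'" "a < m" "b < m" "a' < m" "b' < m" "a \<noteq> b" "a' \<noteq> b'"
  shows "a = a' \<and> b = b'"
proof -
  have e: "(if i = a then 1 else 0) - (if i = b then 1 else 0)
     = ((if i = a' then 1 else 0) - (if i = b' then 1 else 0) :: int)" if i: "0 < i" "i < m" for i
  proof -
    have "vv m a b $ i = vv m a' b' $ i" using assms(1) by simp
    then show ?thesis using i by (simp add: vv_idx)
  qed
  have "a = a'"
  proof (rule ccontr)
    assume ne: "a \<noteq> a'"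
    show False
    proof (cases "a = 0")
      case True
      then have "0 < a'" using ne by simp
      then show False using e[of a'] assms ne by (auto split: if_splits)
    next
      case False
      then show False using e[of a] assms ne by (auto split: if_splits)
    qed
  qed
  moreover have "b = b'"
  proof (rule ccontr)
    assume ne: "b \<noteq> b'"
    show False
    proof (cases "b = 0")
      case True
      then have "0 < b'" using ne by simp
      then show False using e[of b'] assms ne by (auto split: if_splits)
    next
      case False
      then show False using e[of b] assms ne by (auto split: if_splits)
    qed
  qed
  ultimately show ?thesis by simp
qed

lemma vv_ne0:
  assumes "a < m" "b < m" "a \<noteq> b"
  shows "vv m a b \<noteq> vv m 0 0"
proof
  assume h: "vv m a b = vv m 0 0"
  show False
  proof (cases "a = 0")
    case True
    then have "0 < b" using assms by simp
    then show False using arg_cong[OF h, of "\<lambda>v. v $ b"] vv_idx[of b m] assms by auto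
  next
    case False
    then show False using arg_cong[OF h, of "\<lambda>v. v $ a"] vv_idx[of a m] assms by auto
  qed
qed


definition SS :: "nat \<Rightarrow> int vec set" where
  "SS m = (\<lambda>(a,b). vv m a b) ` ({..<m} \<times> {..<m})"

lemma card_SS:
  assumes "m > 0"
  shows "card (SS m) = m * (m - 1) + 1"
proof -
  define D where "D = {..<m} \<times> {..<m} - (\<lambda>a. (a,a)) ` {..<m}"
  have Dm: "D = {(a,b). a<m \<and> b<m \<and> a\<noteq>b}" unfolding D_def by auto
  have S: "SS m = insert (vv m 0 0) ((\<lambda>(a,b). vv m a b) ` D)"
  proof (intro equalityI subsetI)
    have d: "vv m a a = vv m 0 0" for a unfolding vv_def by auto
    fix v assume "v \<in> SS m"
    then obtain a b where ab: "a < m" "b < m" "v = vv m a b" unfolding SS_def by auto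
    show "v \<in> insert (vv m 0 0) ((\<lambda>(a,b). vv m a b) ` D)"
    proof (cases "a = b")
      case True then show ?thesis using ab d by simp
    next
      case False
      then have "(a,b) \<in> D" unfolding D_def using ab by auto
      then show ?thesis using ab by force
    qed
  next
    fix v assume v: "v \<in> insert (vv m 0 0) ((\<lambda>(a,b). vv m a b) ` D)"
    have "(0,0) \<in> {..<m} \<times> {..<m}" using assms by simp
    then have "vv m 0 0 \<in> SS m" unfolding SS_def by force
    moreover have "(\<lambda>(a,b). vv m a b) ` D \<subseteq> SS m" unfolding SS_def D_def by auto
    ultimately show "v \<in> SS m" using v by blast
  qed
  have inj: "inj_on (\<lambda>(a,b). vv m a b) D"
    unfolding inj_on_def Dm using vv_inj by fast
  have notin: "vv m 0 0 \<notin> (\<lambda>(a,b). vv m a b) ` D"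
    unfolding Dm using vv_ne0 by fastforce
  have "card ((\<lambda>a. (a,a)) ` {..<m}) = m"
    by (subst card_image) (auto simp: inj_on_def)
  then have cD: "card D = m * m - m"
    unfolding D_def by (subst card_Diff_subset) (auto simp: card_cartesian_product)
  have "card (SS m) = card D + 1"
    using S inj notin by (simp add: card_image D_def)
  then show ?thesis using cD by (simp add: algebra_simps diff_mult_distrib2)
qed



definition VV :: "nat \<Rightarrow> int vec set" where
  "VV m = {v \<in> carrier_vec m. \<forall>i<m. v $ i \<in> {-1,0,1}}"

lemma finite_VV: "finite (VV m)"
proof -
  have "VV m \<subseteq> (\<lambda>f. vec m f) ` (PiE {..<m} (\<lambda>_. {-1,0,1}))"
  proof
    fix v assume v: "v \<in> VV m"
    then have vc: "v \<in> carrier_vec m" and ve: "\<forall>i<m. v $ i \<in> {-1,0,1}" unfolding VV_def by auto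
    have "v = vec m (restrict (\<lambda>i. v $ i) {..<m})"
    proof (rule eq_vecI)
      show "dim_vec v = dim_vec (vec m (restrict (\<lambda>i. v $ i) {..<m}))" using vc by simp
    next
      fix i assume "i < dim_vec (vec m (restrict (\<lambda>i. v $ i) {..<m}))"
      then have "i < m" by simp
      then show "v $ i = vec m (restrict (\<lambda>i. v $ i) {..<m}) $ i" by simp
    qed
    moreover have "restrict (\<lambda>i. v $ i) {..<m} \<in> PiE {..<m} (\<lambda>_. {-1,0,1})"
      using ve by (simp add: restrict_PiE_iff)
    ultimately show "v \<in> (\<lambda>f. vec m f) ` (PiE {..<m} (\<lambda>_. {-1,0,1}))" by blast
  qed
  moreover have "finite (PiE {..<m} (\<lambda>_. {-1::int,0,1}))" by (rule finite_PiE) simp_all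
  ultimately show ?thesis by (meson finite_imageI finite_subset)
qed



lemma hs_bound: "hs_admissible m n \<Longrightarrow> n \<le> card (VV m)"
proof -
  assume "hs_admissible m n"
  then obtain t A where H: "dim_vec t = m \<and> (\<forall>i<m. 0 \<le> t $ i \<and> t $ i < 1) \<and> t \<noteq> 0\<^sub>v m \<and>
        A \<in> carrier_mat m n \<and> (\<forall>i<m. \<forall>j<n. A $$ (i,j) \<in> {-1, 0, 1}) \<and>
        distinct (cols A) \<and> tot_1_submod (shift_mat t A)" unfolding hs_admissible_def by blast
  from H have A1: "A \<in> carrier_mat m n" by (elim conjE)
  from H have A2: "\<forall>i<m. \<forall>j<n. A $$ (i,j) \<in> {-1, 0, 1}" by (elim conjE)
  from H have A3: "distinct (cols A)" by (elim conjE)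
  have "set (cols A) \<subseteq> VV m"
  proof
    fix v assume "v \<in> set (cols A)"
    then obtain j where j: "j < length (cols A)" "v = cols A ! j" by (metis in_set_conv_nth)
    then have jn: "j < n" and vj: "v = col A j" using A1 by auto
    have "v \<in> carrier_vec m" using vj col_dim[of A j] carrier_matD(1)[OF A1] by simp
    moreover have "\<forall>i<m. v $ i \<in> {-1,0,1}" proof (intro allI impI)
      fix i assume "i < m"
      then have "v $ i = A $$ (i,j)" using vj A1 jn by simp
      then show "v $ i \<in> {-1,0,1}" using A2 \<open>i < m\<close> jn by simp
    qed
    ultimately show "v \<in> VV m" unfolding VV_def by blast
  qed
  then have "card (set (cols A)) \<le> card (VV m)" using finite_VV by (rule card_mono[rotated])
  moreover have "card (set (cols A)) = n" using distinct_card[OF A3] A1 by simp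
  ultimately show ?thesis by simp
qed



lemma pick_inj: "a < card I \<Longrightarrow> a' < card I \<Longrightarrow> pick I a = pick I a' \<Longrightarrow> a = a'"
  by (metis card_pick_le)

lemma vv_vals:
  assumes "i < m"
  shows "vv m a b $ i \<in> {-1,0,1}" "vv m a b $ i = 1 \<Longrightarrow> i = a" "vv m a b $ i = -1 \<Longrightarrow> i = b"
    "vv m a b $ 0 = 0"
  using assms by (auto simp: vv_idx vv_def split: if_splits)

lemma main_adm:
  assumes m: "m > 0"
  shows "hs_admissible m (m * (m - 1) + 1)"
proof -
  have fS: "finite (SS m)" unfolding SS_def by simp
  obtain xs where xs: "distinct xs" "set xs = SS m" using finite_distinct_list[OF fS] by blast
  define N where "N = length xs"
  have N: "N = m * (m - 1) + 1" unfolding N_def using distinct_card[OF xs(1)] xs(2) card_SS[OF m] by simp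
  have xsv: "\<exists>a b. xs ! j = vv m a b" if "j < N" for j
  proof -
    have "xs ! j \<in> SS m" using that xs(2) unfolding N_def by (metis nth_mem)
    then show ?thesis unfolding SS_def by auto
  qed
  have xsC: "set xs \<subseteq> carrier_vec m" using xs(2) vv_carrier unfolding SS_def by auto
  define A where "A = mat_of_cols m xs"
  have AC: "A \<in> carrier_mat m N" unfolding A_def N_def by simp
  have Aidx: "A $$ (i,j) = xs ! j $ i" if "i < m" "j < N" for i j
    unfolding A_def using that mat_of_cols_index N_def by metis
  have Acols: "cols A = xs" unfolding A_def using xsC by simp
  have Avals: "A $$ (i,j) \<in> {-1,0,1}" if h: "i < m" "j < N" for i j
  proof -
    obtain a b where e: "xs ! j = vv m a b" using xsv[OF h(2)] by blast
    show ?thesis using Aidx[OF h] e vv_vals(1)[OF h(1), of a b] by simp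
  qed
  have A0: "A $$ (0,j) = 0" if h: "j < N" for j
  proof -
    obtain a b where e: "xs ! j = vv m a b" using xsv[OF h] by blast
    show ?thesis using Aidx[OF m h] e vv_vals(4)[OF m, of a b] by simp
  qed
  have A1: "i = i'" if h: "i < m" "i' < m" "j < N" "A $$ (i,j) = 1" "A $$ (i',j) = 1" for i i' j
  proof -
    obtain a b where e: "xs ! j = vv m a b" using xsv[OF h(3)] by blast
    have "i = a" using vv_vals(2)[OF h(1), of a b] Aidx[OF h(1,3)] e h(4) by simp
    moreover have "i' = a" using vv_vals(2)[OF h(2), of a b] Aidx[OF h(2,3)] e h(5) by simp
    ultimately show ?thesis by simp
  qed
  have A2: "i = i'" if h: "i < m" "i' < m" "j < N" "A $$ (i,j) = -1" "A $$ (i',j) = -1" for i i' j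
  proof -
    obtain a b where e: "xs ! j = vv m a b" using xsv[OF h(3)] by blast
    have "i = b" using vv_vals(3)[OF h(1), of a b] Aidx[OF h(1,3)] e h(4) by simp
    moreover have "i' = b" using vv_vals(3)[OF h(2), of a b] Aidx[OF h(2,3)] e h(5) by simp
    ultimately show ?thesis by simp
  qed
  define c :: real where "c = 1 / (fact m + 1)"
  have fm: "(0::real) < fact m" by (rule fact_gt_zero)
  have h1: "(1::real) < fact m + 1" using fm by linarith
  have p: "(0::real) < fact m + 1" using fm by linarith
  have c0: "0 < c" "c < 1" unfolding c_def using h1 p by (simp_all add: divide_less_eq p)
  have cf: "fact m * c \<le> 1" unfolding c_def using h1 p by (simp add: divide_le_eq p)
  define t where "t = vec m (\<lambda>i. if i = 0 then c else 0)"
  define M where "M = shift_mat t A"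
  have MC: "M \<in> carrier_mat m N" unfolding M_def shift_mat_def using AC by auto
  have Midx: "M $$ (i,j) = (if i = 0 then c else 0) + real_of_int (A $$ (i,j))" if "i < m" "j < N" for i j
    unfolding M_def shift_mat_def t_def using that AC by auto
  have tot: "tot_1_submod M"
    unfolding tot_1_submod_def
  proof (intro allI impI)
    fix I J assume I: "I \<subseteq> {..<dim_row M}" and J: "J \<subseteq> {..<dim_col M}" and IJ: "card I = card J"
    define k where "k = card I"
    have I': "{i. i < dim_row M \<and> i \<in> I} = I" using I by auto
    have J': "{j. j < dim_col M \<and> j \<in> J} = J" using J by auto
    have Im: "\<And>i. i \<in> I \<Longrightarrow> i < m" using I MC by auto
    have JN: "\<And>j. j \<in> J \<Longrightarrow> j < N" using J MC by auto
    define B where "B = submatrix M I J"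
    have BC: "B \<in> carrier_mat k k" unfolding B_def k_def using dim_submatrix[of M I J] I' J' IJ by auto
    have Bidx: "B $$ (a,b) = M $$ (pick I a, pick J b)" if "a < k" "b < k" for a b
      unfolding B_def using submatrix_index[of a M I b J] I' J' that IJ k_def by simp
    have pI: "pick I a < m" if "a < k" for a using pick_in_set_le[of a I] that Im k_def by auto
    have pJ: "pick J b < N" if "b < k" for b using pick_in_set_le[of b J] that JN k_def IJ by auto
    have km: "k \<le> m"
    proof -
      have "card I \<le> card {..<m}" using Im by (intro card_mono) auto
      then show ?thesis unfolding k_def by simp
    qed
    show "\<bar>det B\<bar> \<le> 1"
    proof (cases "0 \<in> I")
      case True
      have fI: "finite I" using Im by (meson finite_lessThan finite_subset lessThan_iff subsetI)
      then have k0: "0 < k" unfolding k_def using True card_gt_0_iff by blast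
      have p0: "pick I 0 = 0" using True by (simp add: Least_eq_0)
      have "\<bar>det B\<bar> \<le> fact k * c"
      proof (rule det_bound[OF BC _ k0])
        fix a b assume ab: "a < k" "b < k"
        show "\<bar>B $$ (a, b)\<bar> \<le> 1"
          using Bidx[OF ab] Midx[OF pI[OF ab(1)] pJ[OF ab(2)]] Avals[OF pI[OF ab(1)] pJ[OF ab(2)]] c0
            A0[OF pJ[OF ab(2)]] by auto
      next
        fix b assume b: "b < k"
        show "\<bar>B $$ (0, b)\<bar> \<le> c"
          using Bidx[OF k0 b] p0 Midx[OF m pJ[OF b]] A0[OF pJ[OF b]] c0 by simp
      qed
      also have "\<dots> \<le> fact m * c" using km c0 by (intro mult_right_mono) (auto simp: fact_mono)
      also have "\<dots> \<le> 1" by (rule cf)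
      finally show ?thesis .
    next
      case False
      have Bv: "B $$ (a,b) = real_of_int (A $$ (pick I a, pick J b))" if "a < k" "b < k" for a b
      proof -
        have "pick I a \<in> I" using pick_in_set_le[of a I] that k_def by simp
        then have "pick I a \<noteq> 0" using False by metis
        then show ?thesis using Bidx[OF that] Midx[OF pI[OF that(1)] pJ[OF that(2)]] by simp
      qed
      have "netw B k"
        unfolding netw_def
      proof (intro conjI allI impI)
        show "B \<in> carrier_mat k k" by (rule BC)
      next
        fix a b assume ab: "a < k" "b < k"
        have "A $$ (pick I a, pick J b) \<in> {-1,0,1}" by (rule Avals[OF pI[OF ab(1)] pJ[OF ab(2)]])
        then show "B $$ (a,b) \<in> {-1,0,1}" using Bv[OF ab] by auto
      next
        fix b a a' assume h: "b < k" "a < k" "a' < k" "B $$ (a,b) = 1" "B $$ (a',b) = 1"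
        then have e: "A $$ (pick I a, pick J b) = 1" "A $$ (pick I a', pick J b) = 1" using Bv[OF h(2,1)] Bv[OF h(3,1)] by auto
        have "pick I a = pick I a'" by (rule A1[OF pI[OF h(2)] pI[OF h(3)] pJ[OF h(1)] e])
        then show "a = a'" using pick_inj h(2,3) unfolding k_def by blast
      next
        fix b a a' assume h: "b < k" "a < k" "a' < k" "B $$ (a,b) = -1" "B $$ (a',b) = -1"
        then have e: "A $$ (pick I a, pick J b) = -1" "A $$ (pick I a', pick J b) = -1" using Bv[OF h(2,1)] Bv[OF h(3,1)] by auto
        have "pick I a = pick I a'" by (rule A2[OF pI[OF h(2)] pI[OF h(3)] pJ[OF h(1)] e])
        then show "a = a'" using pick_inj h(2,3) unfolding k_def by blast
      qed
      then have "det B \<in> {-1,0,1}" by (rule netw_det)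
      then show ?thesis by auto
    qed
  qed
  have tne: "t \<noteq> 0\<^sub>v m"
  proof
    assume "t = 0\<^sub>v m"
    then have "t $ 0 = 0" using m by simp
    then show False using c0 m unfolding t_def by simp
  qed
  show ?thesis
    unfolding hs_admissible_def N[symmetric]
  proof (intro exI conjI)
    show "dim_vec t = m" unfolding t_def by simp
    show "\<forall>i<m. 0 \<le> t $ i \<and> t $ i < 1" unfolding t_def using c0 by auto
    show "t \<noteq> 0\<^sub>v m" by (rule tne)
    show "A \<in> carrier_mat m N" by (rule AC)
    show "\<forall>i<m. \<forall>j<N. A $$ (i,j) \<in> {-1, 0, 1}" using Avals by blast
    show "distinct (cols A)" using Acols xs(1) by simp
    show "tot_1_submod (shift_mat t A)" using tot unfolding M_def .
  qed
qed


theorem proposition2p6: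
  fixes m :: nat
  assumes "m > 0"
  shows "shifted_heller m \<ge> m * (m - 1) + 1
         \<and> (m \<ge> 2 \<longrightarrow> m * (m - 1) + 1 = (m - 1)^2 + (m - 1) + 1)"
proof
  have fin: "finite {n. hs_admissible m n}"
    by (rule finite_subset[of _ "{..card (VV m)}"]) (auto dest: hs_bound)
  have mem: "m * (m - 1) + 1 \<in> {n. hs_admissible m n}" using main_adm[OF assms] by simp
  show "shifted_heller m \<ge> m * (m - 1) + 1"
    unfolding shifted_heller_def by (rule Max_ge[OF fin mem])
next
  show "m \<ge> 2 \<longrightarrow> m * (m - 1) + 1 = (m - 1)^2 + (m - 1) + 1"
    by (cases m) (simp_all add: power2_eq_square algebra_simps)
qed

end
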